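(* Let $P$ be a generic set of $n$ points in convex position in the plane. If each point of $P$ is colored red or blue independently and uniformly at random, giving $P=R\cup B$, then $\mathbb{E}[\operatorname{cr}(R,B)]\ge n/4-1$.
   Context: A finite planar point set is generic if no three of its points are collinear and every subset has a unique Euclidean minimum spanning tree (MST). For a generic set $X$, $T_X$ denotes its MST, drawn with straight-line edges. For disjoint $R,B$ with $R\cup B$ generic, $\operatorname{cr}(R,B)$ is the number of crossings between the edges of $T_R$ and the edges of $T_B$. *)

theory Defs
  imports "HOL-Analysis.Analysis"
begin

type_synonym point = "real \<times> real"

definition edges_on :: "point set \<Rightarrow> point set set" where
  "edges_on X = {{a, b} | a b. a \<in> X \<and> b \<in> X \<and> a \<noteq> b}"

definition edge_rel :: "point set set \<Rightarrow> (point \<times> point) set" where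
  "edge_rel E = {(a, b). {a, b} \<in> E}"

definition spanning_tree :: "point set \<Rightarrow> point set set \<Rightarrow> bool" where
  "spanning_tree X E \<longleftrightarrow> E \<subseteq> edges_on X \<and>
     (\<forall>a\<in>X. \<forall>b\<in>X. (a, b) \<in> (edge_rel E)\<^sup>*) \<and> card E = card X - 1"

definition edge_len :: "point set \<Rightarrow> real" where
  "edge_len e = Max ((\<lambda>(a, b). dist a b) ` (e \<times> e))"

definition tree_weight :: "point set set \<Rightarrow> real" where
  "tree_weight E = (\<Sum>e\<in>E. edge_len e)"

definition is_MST :: "point set \<Rightarrow> point set set \<Rightarrow> bool" where
  "is_MST X E \<longleftrightarrow> spanning_tree X E \<and>
     (\<forall>E'. spanning_tree X E' \<longrightarrow> tree_weight E \<le> tree_weight E')"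

text \<open>T_X: the (unique, for generic sets) Euclidean minimum spanning tree.\<close>
definition MST :: "point set \<Rightarrow> point set set" where
  "MST X = (THE E. is_MST X E)"

definition generic :: "point set \<Rightarrow> bool" where
  "generic P \<longleftrightarrow> finite P \<and>
     (\<forall>a\<in>P. \<forall>b\<in>P. \<forall>c\<in>P. a \<noteq> b \<and> a \<noteq> c \<and> b \<noteq> c \<longrightarrow> \<not> collinear {a, b, c}) \<and>
     (\<forall>S\<subseteq>P. \<exists>!E. is_MST S E)"

definition convex_position :: "point set \<Rightarrow> bool" where
  "convex_position P \<longleftrightarrow> (\<forall>p\<in>P. p \<notin> convex hull (P - {p}))"

text \<open>Number of pairs (e, f) of an edge of T_R and an edge of T_B whose straight-line
  segments intersect (for disjoint R, B with R \<union> B generic, these are proper crossings).\<close>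
definition cr :: "point set \<Rightarrow> point set \<Rightarrow> nat" where
  "cr R B = card {(e, f). e \<in> MST R \<and> f \<in> MST B \<and> convex hull e \<inter> convex hull f \<noteq> {}}"

end

theory Submission
  imports Defs
begin


definition orient :: "point \<Rightarrow> point \<Rightarrow> point \<Rightarrow> real" where
  "orient a b c = (fst b - fst a) * (snd c - snd a) - (snd b - snd a) * (fst c - fst a)"

lemma orient_cyc: "orient a b c = orient b c a" "orient a b c = - orient b a c"
  unfolding orient_def by algebra+

lemma orient_nz:
  assumes "generic P" "a \<in> P" "b \<in> P" "c \<in> P" "a \<noteq> b" "a \<noteq> c" "b \<noteq> c"
  shows "orient a b c \<noteq> 0"
proof
  assume o: "orient a b c = 0"
  have "collinear {a, b, c}"
  proof -
    have "\<exists>u. b = u *\<^sub>R a + (1 - u) *\<^sub>R c"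
    proof (cases "fst a = fst c")
      case True
      then have "snd a \<noteq> snd c" using assms(6) by (simp add: prod_eq_iff)
      define u where "u = (snd b - snd c) / (snd a - snd c)"
      have "fst b = fst c" using o True \<open>snd a \<noteq> snd c\<close> unfolding orient_def
        by (smt (verit, ccfv_SIG) mult_eq_0_iff)
      have "u * (snd a - snd c) = snd b - snd c" using \<open>snd a \<noteq> snd c\<close> by (simp add: u_def)
      then show ?thesis using True \<open>fst b = fst c\<close>
        by (intro exI[of _ u]) (auto simp: prod_eq_iff algebra_simps)
    next
      case False
      define u where "u = (fst b - fst c) / (fst a - fst c)"
      have "snd b - snd c = u * (snd a - snd c)"
        using o False unfolding orient_def u_def
        by (simp add: field_simps)
      moreover have "u * (fst a - fst c) = fst b - fst c" using False by (simp add: u_def)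
      ultimately show ?thesis
        by (intro exI[of _ u]) (auto simp: prod_eq_iff algebra_simps)
    qed
    then show ?thesis by (simp add: collinear_3_expand)
  qed
  then show False using assms unfolding generic_def by blast
qed

lemma cp4:
  fixes a b c d :: point
  assumes cp: "convex_position P" and P: "a \<in> P" "b \<in> P" "c \<in> P" "d \<in> P"
    and dist: "d \<noteq> a" "d \<noteq> b" "d \<noteq> c"
    and eq: "ka *\<^sub>R a + kb *\<^sub>R b + kc *\<^sub>R c + kd *\<^sub>R d = 0"
    and sm: "ka + kb + kc + kd = 0" and s: "kd < 0" "ka \<ge> 0" "kb \<ge> 0" "kc \<ge> 0"
  shows False
proof -
  let ?m = "- kd"
  have "d = (ka / ?m) *\<^sub>R a + (kb / ?m) *\<^sub>R b + (kc / ?m) *\<^sub>R c"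
  proof -
    have "ka *\<^sub>R a + kb *\<^sub>R b + kc *\<^sub>R c = - (kd *\<^sub>R d)" using eq eq_neg_iff_add_eq_0 by blast
    then have "?m *\<^sub>R d = ka *\<^sub>R a + kb *\<^sub>R b + kc *\<^sub>R c" by simp
    then have "(1 / ?m) *\<^sub>R (?m *\<^sub>R d) = (1 / ?m) *\<^sub>R (ka *\<^sub>R a + kb *\<^sub>R b + kc *\<^sub>R c)" by simp
    then show ?thesis using s by (simp add: scaleR_add_right)
  qed
  moreover have "ka / ?m + kb / ?m + kc / ?m = 1"
  proof -
    have "ka / ?m + kb / ?m + kc / ?m = (ka + kb + kc) / ?m" by (simp add: add_divide_distrib)
    also have "ka + kb + kc = ?m" using sm by linarith
    finally show ?thesis using s by simp
  qed
  moreover have "0 \<le> ka / ?m" "0 \<le> kb / ?m" "0 \<le> kc / ?m" using s by (auto simp: divide_nonneg_neg)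
  ultimately have "d \<in> convex hull {a, b, c}"
    unfolding convex_hull_3 by blast
  moreover have "convex hull {a, b, c} \<subseteq> convex hull (P - {d})"
    by (rule hull_mono) (use P dist in auto)
  ultimately show False using cp P unfolding convex_position_def by blast
qed

lemma vec_id:
  fixes a b c d :: point
  shows "(- orient b d c) *\<^sub>R a + (- orient a c d) *\<^sub>R b + orient b d a *\<^sub>R c + orient a c b *\<^sub>R d = 0"
    and "- orient b d c - orient a c d + orient b d a + orient a c b = 0"
  unfolding orient_def by (simp_all add: prod_eq_iff algebra_simps)

lemma cp4_all:
  fixes a b c d :: point
  assumes cp: "convex_position P" and P: "a \<in> P" "b \<in> P" "c \<in> P" "d \<in> P"
    and dist: "a \<noteq> b" "a \<noteq> c" "a \<noteq> d" "b \<noteq> c" "b \<noteq> d" "c \<noteq> d"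
    and eq: "ka *\<^sub>R a + kb *\<^sub>R b + kc *\<^sub>R c + kd *\<^sub>R d = 0"
    and sm: "ka + kb + kc + kd = 0"
  shows "\<not> (ka < 0 \<and> kb \<ge> 0 \<and> kc \<ge> 0 \<and> kd \<ge> 0)"
    "\<not> (kb < 0 \<and> ka \<ge> 0 \<and> kc \<ge> 0 \<and> kd \<ge> 0)"
    "\<not> (kc < 0 \<and> kb \<ge> 0 \<and> ka \<ge> 0 \<and> kd \<ge> 0)"
    "\<not> (kd < 0 \<and> kb \<ge> 0 \<and> kc \<ge> 0 \<and> ka \<ge> 0)"
    "\<not> (ka > 0 \<and> kb \<le> 0 \<and> kc \<le> 0 \<and> kd \<le> 0)"
    "\<not> (kb > 0 \<and> ka \<le> 0 \<and> kc \<le> 0 \<and> kd \<le> 0)"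
    "\<not> (kc > 0 \<and> kb \<le> 0 \<and> ka \<le> 0 \<and> kd \<le> 0)"
    "\<not> (kd > 0 \<and> kb \<le> 0 \<and> kc \<le> 0 \<and> ka \<le> 0)"
proof -
  have eqn: "(-ka) *\<^sub>R a + (-kb) *\<^sub>R b + (-kc) *\<^sub>R c + (-kd) *\<^sub>R d = 0"
  proof -
    have "(-1::real) *\<^sub>R (ka *\<^sub>R a + kb *\<^sub>R b + kc *\<^sub>R c + kd *\<^sub>R d) = 0" using eq by simp
    then show ?thesis by (simp only: scaleR_add_right scaleR_scaleR) simp
  qed
  have smn: "(-ka) + (-kb) + (-kc) + (-kd) = 0" using sm by linarith
  have e1: "kb *\<^sub>R b + kc *\<^sub>R c + kd *\<^sub>R d + ka *\<^sub>R a = 0" using eq by (simp only: add_ac)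
  have e2: "ka *\<^sub>R a + kc *\<^sub>R c + kd *\<^sub>R d + kb *\<^sub>R b = 0" using eq by (simp only: add_ac)
  have e3: "ka *\<^sub>R a + kb *\<^sub>R b + kd *\<^sub>R d + kc *\<^sub>R c = 0" using eq by (simp only: add_ac)
  have n1: "(-kb) *\<^sub>R b + (-kc) *\<^sub>R c + (-kd) *\<^sub>R d + (-ka) *\<^sub>R a = 0" using eqn by (simp only: add_ac)
  have n2: "(-ka) *\<^sub>R a + (-kc) *\<^sub>R c + (-kd) *\<^sub>R d + (-kb) *\<^sub>R b = 0" using eqn by (simp only: add_ac)
  have n3: "(-ka) *\<^sub>R a + (-kb) *\<^sub>R b + (-kd) *\<^sub>R d + (-kc) *\<^sub>R c = 0" using eqn by (simp only: add_ac)
  show "\<not> (ka < 0 \<and> kb \<ge> 0 \<and> kc \<ge> 0 \<and> kd \<ge> 0)"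
  proof
    assume h: "ka < 0 \<and> kb \<ge> 0 \<and> kc \<ge> 0 \<and> kd \<ge> 0"
    show False by (rule cp4[OF cp P(2,3,4,1) _ _ _ e1]) (use dist sm h in auto)
  qed
  show "\<not> (kb < 0 \<and> ka \<ge> 0 \<and> kc \<ge> 0 \<and> kd \<ge> 0)"
  proof
    assume h: "kb < 0 \<and> ka \<ge> 0 \<and> kc \<ge> 0 \<and> kd \<ge> 0"
    show False by (rule cp4[OF cp P(1,3,4,2) _ _ _ e2]) (use dist sm h in auto)
  qed
  show "\<not> (kc < 0 \<and> kb \<ge> 0 \<and> ka \<ge> 0 \<and> kd \<ge> 0)"
  proof
    assume h: "kc < 0 \<and> kb \<ge> 0 \<and> ka \<ge> 0 \<and> kd \<ge> 0"
    show False by (rule cp4[OF cp P(1,2,4,3) _ _ _ e3]) (use dist sm h in auto)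
  qed
  show "\<not> (kd < 0 \<and> kb \<ge> 0 \<and> kc \<ge> 0 \<and> ka \<ge> 0)"
  proof
    assume h: "kd < 0 \<and> kb \<ge> 0 \<and> kc \<ge> 0 \<and> ka \<ge> 0"
    show False by (rule cp4[OF cp P(1,2,3,4) _ _ _ eq]) (use dist sm h in auto)
  qed
  show "\<not> (ka > 0 \<and> kb \<le> 0 \<and> kc \<le> 0 \<and> kd \<le> 0)"
  proof
    assume h: "ka > 0 \<and> kb \<le> 0 \<and> kc \<le> 0 \<and> kd \<le> 0"
    show False by (rule cp4[OF cp P(2,3,4,1) _ _ _ n1]) (use dist smn h in auto)
  qed
  show "\<not> (kb > 0 \<and> ka \<le> 0 \<and> kc \<le> 0 \<and> kd \<le> 0)"
  proof
    assume h: "kb > 0 \<and> ka \<le> 0 \<and> kc \<le> 0 \<and> kd \<le> 0"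
    show False by (rule cp4[OF cp P(1,3,4,2) _ _ _ n2]) (use dist smn h in auto)
  qed
  show "\<not> (kc > 0 \<and> kb \<le> 0 \<and> ka \<le> 0 \<and> kd \<le> 0)"
  proof
    assume h: "kc > 0 \<and> kb \<le> 0 \<and> ka \<le> 0 \<and> kd \<le> 0"
    show False by (rule cp4[OF cp P(1,2,4,3) _ _ _ n3]) (use dist smn h in auto)
  qed
  show "\<not> (kd > 0 \<and> kb \<le> 0 \<and> kc \<le> 0 \<and> ka \<le> 0)"
  proof
    assume h: "kd > 0 \<and> kb \<le> 0 \<and> kc \<le> 0 \<and> ka \<le> 0"
    show False by (rule cp4[OF cp P(1,2,3,4) _ _ _ eqn]) (use dist smn h in auto)
  qed
qed

lemma crossing:
  fixes a b c d :: point
  assumes g: "generic P" and cp: "convex_position P" and P: "a \<in> P" "b \<in> P" "c \<in> P" "d \<in> P"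
    and dist: "a \<noteq> b" "a \<noteq> c" "a \<noteq> d" "b \<noteq> c" "b \<noteq> d" "c \<noteq> d"
    and opp: "orient a c b * orient a c d < 0"
  shows "orient b d a * orient b d c < 0" "convex hull {a, c} \<inter> convex hull {b, d} \<noteq> {}"
proof -
  define \<alpha> where "\<alpha> = orient a c b"
  define \<beta> where "\<beta> = orient a c d"
  define \<gamma> where "\<gamma> = orient b d a"
  define \<delta> where "\<delta> = orient b d c"
  have eq: "(- \<delta>) *\<^sub>R a + (- \<beta>) *\<^sub>R b + \<gamma> *\<^sub>R c + \<alpha> *\<^sub>R d = 0"
    and sm: "(- \<delta>) + (- \<beta>) + \<gamma> + \<alpha> = 0"
    unfolding \<alpha>_def \<beta>_def \<gamma>_def \<delta>_def using vec_id[of b d c a] by auto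
  note C = cp4_all[OF cp P dist eq sm]
  have g0: "\<gamma> \<noteq> 0" unfolding \<gamma>_def by (rule orient_nz[OF g]) (use P dist in auto)
  have d0: "\<delta> \<noteq> 0" unfolding \<delta>_def by (rule orient_nz[OF g]) (use P dist in auto)
  have ab: "(\<alpha> > 0 \<and> \<beta> < 0) \<or> (\<alpha> < 0 \<and> \<beta> > 0)" using opp unfolding \<alpha>_def \<beta>_def mult_less_0_iff by auto
  have gd: "\<gamma> * \<delta> < 0"
  proof (rule ccontr)
    assume "\<not> \<gamma> * \<delta> < 0"
    then have "(\<gamma> > 0 \<and> \<delta> > 0) \<or> (\<gamma> < 0 \<and> \<delta> < 0)" using g0 d0
      by (metis linorder_neqE_linordered_idom mult_neg_pos mult_pos_neg)
    then show False using ab C(1,3,5,7) by smt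
  qed
  then show "orient b d a * orient b d c < 0" unfolding \<gamma>_def \<delta>_def .
  have gd': "(\<gamma> > 0 \<and> \<delta> < 0) \<or> (\<gamma> < 0 \<and> \<delta> > 0)" using gd mult_less_0_iff by auto
  define s where "s = \<gamma> - \<delta>"
  have s0: "s \<noteq> 0" using gd' unfolding s_def by auto
  have s2: "s = \<beta> - \<alpha>" using sm unfolding s_def by linarith
  have e1: "(- \<delta>) *\<^sub>R a + \<gamma> *\<^sub>R c = \<beta> *\<^sub>R b + (- \<alpha>) *\<^sub>R d"
    using eq by (simp add: algebra_simps eq_neg_iff_add_eq_0)
  define x where "x = (1 / s) *\<^sub>R ((- \<delta>) *\<^sub>R a + \<gamma> *\<^sub>R c)"
  have x1: "x = (- \<delta> / s) *\<^sub>R a + (\<gamma> / s) *\<^sub>R c"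
    unfolding x_def by (simp add: scaleR_add_right scaleR_diff_right)
  have x2: "x = (\<beta> / s) *\<^sub>R b + (- \<alpha> / s) *\<^sub>R d"
    unfolding x_def e1 by (simp add: scaleR_add_right scaleR_diff_right)
  have "x \<in> convex hull {a, c}"
    unfolding convex_hull_2
  proof (intro CollectI exI conjI)
    show "x = (- \<delta> / s) *\<^sub>R a + (\<gamma> / s) *\<^sub>R c" by (rule x1)
    show "0 \<le> - \<delta> / s" unfolding zero_le_divide_iff s_def using gd' by linarith
    show "0 \<le> \<gamma> / s" unfolding zero_le_divide_iff s_def using gd' by linarith
    have "- \<delta> / s + \<gamma> / s = (\<gamma> - \<delta>) / s" by (simp add: diff_divide_distrib)
    then show "- \<delta> / s + \<gamma> / s = 1" using s0 unfolding s_def by simp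
  qed
  moreover have "x \<in> convex hull {b, d}"
    unfolding convex_hull_2
  proof (intro CollectI exI conjI)
    show "x = (\<beta> / s) *\<^sub>R b + (- \<alpha> / s) *\<^sub>R d" by (rule x2)
    show "0 \<le> \<beta> / s" unfolding zero_le_divide_iff s2 using ab by linarith
    show "0 \<le> - \<alpha> / s" unfolding zero_le_divide_iff s2 using ab by linarith
    have "\<beta> / s + - \<alpha> / s = (\<beta> - \<alpha>) / s" by (simp add: diff_divide_distrib)
    then show "\<beta> / s + - \<alpha> / s = 1" using s0 s2 by simp
  qed
  ultimately show "convex hull {a, c} \<inter> convex hull {b, d} \<noteq> {}" by blast
qed



lemma path_cross:
  assumes "(x, y) \<in> r\<^sup>*" "Q x" "\<not> Q y"
  shows "\<exists>u v. (u, v) \<in> r \<and> Q u \<and> \<not> Q v"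
  using assms by (induction rule: rtrancl_induct) auto

lemma edge_rel_sym: "(u, v) \<in> edge_rel E \<Longrightarrow> (v, u) \<in> edge_rel E"
  unfolding edge_rel_def by (simp add: insert_commute)

lemma edge_rel_rtrancl_sym: "(u, v) \<in> (edge_rel E)\<^sup>* \<Longrightarrow> (v, u) \<in> (edge_rel E)\<^sup>*"
proof -
  have "sym (edge_rel E)" unfolding sym_def using edge_rel_sym by blast
  then have "sym ((edge_rel E)\<^sup>*)" by (rule sym_rtrancl)
  then show "(u, v) \<in> (edge_rel E)\<^sup>* \<Longrightarrow> (v, u) \<in> (edge_rel E)\<^sup>*" unfolding sym_def by blast
qed

lemma edge_rel_mem:
  assumes "E \<subseteq> edges_on X" "(u, v) \<in> edge_rel E"
  shows "u \<in> X" "v \<in> X" "u \<noteq> v" "{u, v} \<in> E"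
proof -
  have e: "{u, v} \<in> E" using assms(2) unfolding edge_rel_def by simp
  then obtain a b where ab: "{u, v} = {a, b}" "a \<in> X" "b \<in> X" "a \<noteq> b"
    using assms(1) unfolding edges_on_def by blast
  then show "u \<in> X" "v \<in> X" "u \<noteq> v" "{u, v} \<in> E" using e by (auto simp: doubleton_eq_iff)
qed

lemma edge_rel_insert: "edge_rel (insert e F) = edge_rel F \<union> {(u, v). {u, v} = e}"
  unfolding edge_rel_def by auto

lemma rtrancl_union_dom:
  assumes "(x, y) \<in> (r \<union> s)\<^sup>*"
  shows "(x, y) \<in> r\<^sup>* \<or> (\<exists>d\<in>Domain s. (x, d) \<in> r\<^sup>*)"
  using assms
proof (induction rule: converse_rtrancl_induct)
  case base
  then show ?case by simp
next
  case (step x z)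
  then show ?case
  proof (cases "(x, z) \<in> s")
    case True
    then show ?thesis by blast
  next
    case False
    then have "(x, z) \<in> r" using step by blast
    then show ?thesis using step.IH by (meson converse_rtrancl_into_rtrancl)
  qed
qed

lemma count_lemma:
  assumes "finite S"
  shows "(\<forall>e\<in>S. \<exists>a b. e = {a, b}) \<Longrightarrow> finite X \<Longrightarrow>
    (\<forall>x\<in>X. \<forall>y\<in>X. (x, y) \<in> (edge_rel (F \<union> S))\<^sup>*) \<Longrightarrow>
    (\<forall>x\<in>X. \<forall>y\<in>X. x \<noteq> y \<longrightarrow> (x, y) \<notin> (edge_rel F)\<^sup>*) \<Longrightarrow> card X \<le> card S + 1"
  using assms
proof (induction S arbitrary: F X rule: finite_induct)
  case empty
  have h: "\<forall>x\<in>X. \<forall>y\<in>X. x = y" using empty.prems(3,4) by (metis Un_empty_right)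
  have "card X \<le> Suc 0" by (subst card_le_Suc0_iff_eq[OF empty.prems(2)]) (rule h)
  then show ?case by simp
next
  case (insert e S)
  obtain a b where e: "e = {a, b}" using insert.prems(1) by blast
  let ?r = "edge_rel F"
  define Y where "Y = {x \<in> X. (x, a) \<in> ?r\<^sup>*}"
  have Ysub: "Y \<subseteq> X" unfolding Y_def by auto
  have Y1: "card Y \<le> 1"
  proof -
    have "\<forall>x\<in>Y. \<forall>y\<in>Y. x = y"
    proof (intro ballI)
      fix x y assume "x \<in> Y" "y \<in> Y"
      then have "(x, a) \<in> ?r\<^sup>*" "(a, y) \<in> ?r\<^sup>*" "x \<in> X" "y \<in> X" unfolding Y_def
        using edge_rel_rtrancl_sym by auto
      then show "x = y" using insert.prems(4) by (meson rtrancl_trans)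
    qed
    moreover have "finite Y" using Ysub insert.prems(2) finite_subset by blast
    ultimately show ?thesis using card_le_Suc0_iff_eq by auto
  qed
  define X' where "X' = X - Y"
  have dom: "Domain ({(u, v). {u, v} = e}) \<subseteq> {a, b}" unfolding e by (auto simp: doubleton_eq_iff)
  have IH: "card X' \<le> card S + 1"
  proof (rule insert.IH[of X' "insert e F"])
    show "\<forall>e\<in>S. \<exists>a b. e = {a, b}" using insert.prems(1) by blast
    show "finite X'" using insert.prems(2) X'_def by auto
    show "\<forall>x\<in>X'. \<forall>y\<in>X'. (x, y) \<in> (edge_rel (insert e F \<union> S))\<^sup>*"
      using insert.prems(3) unfolding X'_def by auto
    show "\<forall>x\<in>X'. \<forall>y\<in>X'. x \<noteq> y \<longrightarrow> (x, y) \<notin> (edge_rel (insert e F))\<^sup>*"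
    proof (intro ballI impI)
      fix x y assume xy: "x \<in> X'" "y \<in> X'" "x \<noteq> y"
      show "(x, y) \<notin> (edge_rel (insert e F))\<^sup>*"
      proof
      assume c: "(x, y) \<in> (edge_rel (insert e F))\<^sup>*"
      have c2: "(y, x) \<in> (edge_rel (insert e F))\<^sup>*" using c edge_rel_rtrancl_sym by blast
      have nxy: "(x, y) \<notin> ?r\<^sup>*" using insert.prems(4) xy unfolding X'_def by auto
      have nyx: "(y, x) \<notin> ?r\<^sup>*" using insert.prems(4) xy unfolding X'_def by auto
      have xa: "(x, a) \<notin> ?r\<^sup>*" "(y, a) \<notin> ?r\<^sup>*" using xy unfolding X'_def Y_def by auto
      have "(x, b) \<in> ?r\<^sup>*"
        using rtrancl_union_dom[of x y ?r "{(u, v). {u, v} = e}"] c nxy xa dom unfolding edge_rel_insert by blast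
      moreover have "(y, b) \<in> ?r\<^sup>*"
        using rtrancl_union_dom[of y x ?r "{(u, v). {u, v} = e}"] c2 nyx xa dom unfolding edge_rel_insert by blast
      ultimately show False using nxy edge_rel_rtrancl_sym by (meson rtrancl_trans)
      qed
    qed
  qed
  have "card X = card X' + card Y"
    using Ysub insert.prems(2) unfolding X'_def
    by (metis card_Diff_subset card_mono finite_subset le_add_diff_inverse2)
  then show ?case using IH Y1 insert.hyps by simp
qed



lemma MST_props:
  assumes "generic P" "S \<subseteq> P"
  shows "spanning_tree S (MST S)" "MST S \<subseteq> edges_on S" "finite (MST S)"
    "\<forall>a\<in>S. \<forall>b\<in>S. (a, b) \<in> (edge_rel (MST S))\<^sup>*"
proof -
  have "\<exists>!E. is_MST S E" using assms unfolding generic_def by blast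
  then have "is_MST S (MST S)" unfolding MST_def by (rule theI')
  then show st: "spanning_tree S (MST S)" unfolding is_MST_def by blast
  then show sub: "MST S \<subseteq> edges_on S" unfolding spanning_tree_def by blast
  show "\<forall>a\<in>S. \<forall>b\<in>S. (a, b) \<in> (edge_rel (MST S))\<^sup>*" using st unfolding spanning_tree_def by blast
  have "finite P" using assms(1) unfolding generic_def by (rule conjunct1)
  then have fS: "finite S" using assms(2) finite_subset by blast
  have "edges_on S \<subseteq> (\<lambda>(a, b). {a, b}) ` (S \<times> S)" unfolding edges_on_def by (auto simp: image_iff)
  then have "finite (edges_on S)" using fS finite_subset by blast
  then show "finite (MST S)" using sub finite_subset by blast
qed

definition hull_edges :: "point set \<Rightarrow> (point \<times> point) set" where
  "hull_edges P = {(p, q). p \<in> P \<and> q \<in> P \<and> p \<noteq> q \<and> (\<forall>x\<in>P. x \<noteq> p \<and> x \<noteq> q \<longrightarrow> orient p q x > 0)}"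

definition trans_edges :: "point set \<Rightarrow> point set \<Rightarrow> (point \<times> point) set" where
  "trans_edges P R = {h \<in> hull_edges P. fst h \<in> R \<and> snd h \<notin> R}"

definition sep_edges :: "point set \<Rightarrow> point set \<Rightarrow> point set set" where
  "sep_edges R B = {e \<in> MST R. \<exists>u v b b'. e = {u, v} \<and> b \<in> B \<and> b' \<in> B \<and> orient u v b * orient u v b' < 0}"

lemma he_same_fst:
  assumes "(p, q) \<in> hull_edges P" "(p, q') \<in> hull_edges P"
  shows "q = q'"
proof (rule ccontr)
  assume "q \<noteq> q'"
  then have "orient p q q' > 0" "orient p q' q > 0" using assms unfolding hull_edges_def by auto
  moreover have "orient p q' q = - orient p q q'" unfolding orient_def by algebra
  ultimately show False by linarith
qed

lemma he_same_snd:
  assumes "(p, q) \<in> hull_edges P" "(p', q) \<in> hull_edges P"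
  shows "p = p'"
proof (rule ccontr)
  assume "p \<noteq> p'"
  then have "orient p q p' > 0" "orient p' q p > 0" using assms unfolding hull_edges_def by auto
  moreover have "orient p' q p = - orient p q p'" unfolding orient_def by algebra
  ultimately show False by linarith
qed

lemma he_opp:
  assumes "(p, q) \<in> hull_edges P" "(p', q') \<in> hull_edges P"
    and "p \<noteq> p'" "q \<noteq> q'" "p \<noteq> q'" "p' \<noteq> q"
  shows "orient q q' p > 0" "orient q q' p' < 0"
proof -
  have "orient p q q' > 0" "orient p' q' q > 0" using assms unfolding hull_edges_def by auto
  moreover have "orient q q' p = orient p q q'" "orient q q' p' = - orient p' q' q"
    unfolding orient_def by algebra+
  ultimately show "orient q q' p > 0" "orient q q' p' < 0" by linarith+
qed

lemma sep_le_cr: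
  assumes g: "generic P" and cp: "convex_position P" and R: "R \<subseteq> P"
  shows "card (sep_edges R (P - R)) \<le> cr R (P - R)"
proof -
  let ?B = "P - R"
  let ?C = "{(e, f). e \<in> MST R \<and> f \<in> MST ?B \<and> convex hull e \<inter> convex hull f \<noteq> {}}"
  have MR: "MST R \<subseteq> edges_on R" "finite (MST R)" using MST_props[OF g R] by auto
  have MB: "MST ?B \<subseteq> edges_on ?B" "finite (MST ?B)"
    "\<forall>a\<in>?B. \<forall>b\<in>?B. (a, b) \<in> (edge_rel (MST ?B))\<^sup>*" using MST_props[OF g, of ?B] by auto
  have ex: "\<exists>f. f \<in> MST ?B \<and> convex hull e \<inter> convex hull f \<noteq> {}" if e: "e \<in> sep_edges R ?B" for e
  proof -
    obtain u v b b' where uv: "e = {u, v}" "b \<in> ?B" "b' \<in> ?B" "orient u v b * orient u v b' < 0" "e \<in> MST R"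
      using e unfolding sep_edges_def by blast
    have "(u, v) \<in> edge_rel (MST R)" using uv unfolding edge_rel_def by simp
    then have uvR: "u \<in> R" "v \<in> R" "u \<noteq> v" using edge_rel_mem[OF MR(1)] by auto
    obtain x y where xy: "x \<in> ?B" "y \<in> ?B" "orient u v x > 0" "orient u v y < 0"
      using uv(2,3,4) mult_less_0_iff by (metis)
    have "(x, y) \<in> (edge_rel (MST ?B))\<^sup>*" using MB(3) xy(1,2) by blast
    then have "\<exists>w z. (w, z) \<in> edge_rel (MST ?B) \<and> orient u v w > 0 \<and> \<not> orient u v z > 0"
      by (rule path_cross) (use xy in auto)
    then obtain w z where wz: "(w, z) \<in> edge_rel (MST ?B)" "orient u v w > 0" "\<not> orient u v z > 0"
      by blast
    have wzB: "w \<in> ?B" "z \<in> ?B" "w \<noteq> z" "{w, z} \<in> MST ?B" using edge_rel_mem[OF MB(1) wz(1)] by auto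
    have "orient u v z \<noteq> 0" by (rule orient_nz[OF g]) (use uvR wzB R in auto)
    then have "orient u v w * orient u v z < 0" using wz by (simp add: mult_less_0_iff)
    then have "convex hull {u, v} \<inter> convex hull {w, z} \<noteq> {}"
      by (intro crossing(2)[OF g cp]) (use uvR wzB R in auto)
    then show ?thesis using wzB uv by blast
  qed
  define F where "F e = (SOME f. f \<in> MST ?B \<and> convex hull e \<inter> convex hull f \<noteq> {})" for e
  have F: "F e \<in> MST ?B \<and> convex hull e \<inter> convex hull F e \<noteq> {}" if "e \<in> sep_edges R ?B" for e
    unfolding F_def by (rule someI_ex) (rule ex[OF that])
  have "card (sep_edges R ?B) \<le> card ?C"
  proof (rule card_inj_on_le[of "\<lambda>e. (e, F e)"])
    show "inj_on (\<lambda>e. (e, F e)) (sep_edges R ?B)" by (rule inj_onI) simp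
    show "(\<lambda>e. (e, F e)) ` sep_edges R ?B \<subseteq> ?C"
    proof (rule image_subsetI)
      fix e assume e: "e \<in> sep_edges R ?B"
      then have "e \<in> MST R" unfolding sep_edges_def by blast
      then show "(e, F e) \<in> ?C" using F[OF e] by simp
    qed
    show "finite ?C" by (rule finite_subset[of _ "MST R \<times> MST ?B"]) (use MR MB in auto)
  qed
  then show ?thesis unfolding cr_def by simp
qed

lemma trans_le_sep:
  assumes g: "generic P" and cp: "convex_position P" and R: "R \<subseteq> P"
  shows "card (trans_edges P R) \<le> card (sep_edges R (P - R)) + 1"
proof -
  let ?B = "P - R"
  let ?S = "sep_edges R ?B"
  let ?T = "trans_edges P R"
  define F where "F = MST R - ?S"
  define X where "X = fst ` ?T"
  have fP: "finite P" using g unfolding generic_def by (rule conjunct1)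
  have MR: "MST R \<subseteq> edges_on R" "finite (MST R)"
    "\<forall>a\<in>R. \<forall>b\<in>R. (a, b) \<in> (edge_rel (MST R))\<^sup>*" using MST_props[OF g R] by auto
  have SM: "?S \<subseteq> MST R" unfolding sep_edges_def by blast
  have Tsub: "?T \<subseteq> P \<times> P" unfolding trans_edges_def hull_edges_def by auto
  have fT: "finite ?T" using finite_subset[OF Tsub] fP by blast
  have inj: "inj_on fst ?T"
  proof (rule inj_onI)
    fix h h' assume "h \<in> ?T" "h' \<in> ?T" "fst h = fst h'"
    then show "h = h'" unfolding trans_edges_def using he_same_fst
      by (metis (no_types, lifting) mem_Collect_eq prod.collapse)
  qed
  have cardX: "card ?T = card X" unfolding X_def using card_image[OF inj] by simp
  have XR: "X \<subseteq> R" unfolding X_def trans_edges_def by auto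
  have "card X \<le> card ?S + 1"
  proof (rule count_lemma)
    show "finite ?S" using finite_subset[OF SM MR(2)] .
    show "\<forall>e\<in>?S. \<exists>a b. e = {a, b}" unfolding sep_edges_def by blast
    show "finite X" unfolding X_def using fT by simp
    have "F \<union> ?S = MST R" unfolding F_def using SM by blast
    then show "\<forall>x\<in>X. \<forall>y\<in>X. (x, y) \<in> (edge_rel (F \<union> ?S))\<^sup>*" using MR(3) XR by auto
    show "\<forall>x\<in>X. \<forall>y\<in>X. x \<noteq> y \<longrightarrow> (x, y) \<notin> (edge_rel F)\<^sup>*"
    proof (intro ballI impI)
      fix x y assume x: "x \<in> X" and y: "y \<in> X" and xy: "x \<noteq> y"
      obtain q where q: "(x, q) \<in> hull_edges P" "x \<in> R" "q \<notin> R"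
        using x unfolding X_def trans_edges_def by auto
      obtain q' where q': "(y, q') \<in> hull_edges P" "y \<in> R" "q' \<notin> R"
        using y unfolding X_def trans_edges_def by auto
      have qP: "q \<in> P" "q' \<in> P" using q(1) q'(1) unfolding hull_edges_def by auto
      have qq: "q \<noteq> q'" using he_same_snd q(1) q'(1) xy by blast
      have o1: "orient q q' x > 0" "orient q q' y < 0"
        using he_opp[OF q(1) q'(1) xy qq] q q' by auto
      show "(x, y) \<notin> (edge_rel F)\<^sup>*"
      proof
        assume "(x, y) \<in> (edge_rel F)\<^sup>*"
        then have "\<exists>u v. (u, v) \<in> edge_rel F \<and> orient q q' u > 0 \<and> \<not> orient q q' v > 0"
          by (rule path_cross) (use o1 in auto)
        then obtain u v where uv: "(u, v) \<in> edge_rel F" "orient q q' u > 0" "\<not> orient q q' v > 0"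
          by blast
        have FE: "F \<subseteq> edges_on R" using MR(1) unfolding F_def by blast
        have uvR: "u \<in> R" "v \<in> R" "u \<noteq> v" "{u, v} \<in> F" using edge_rel_mem[OF FE uv(1)] by auto
        have uvP: "u \<in> P" "v \<in> P" using uvR(1,2) R by auto
        have d1: "q \<noteq> u" "q \<noteq> v" "u \<noteq> q'" "q' \<noteq> v" using uvR(1,2) q(3) q'(3) by auto
        have "orient q q' v \<noteq> 0" by (rule orient_nz[OF g qP(1,2) uvP(2) qq d1(2,4)])
        then have "orient q q' u * orient q q' v < 0" using uv(2,3) by (simp add: mult_less_0_iff)
        then have "orient u v q * orient u v q' < 0"
          by (rule crossing(1)[OF g cp qP(1) uvP(1) qP(2) uvP(2) d1(1) qq d1(2,3) uvR(3) d1(4)])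
        then have "{u, v} \<in> ?S" using uvR qP q q' unfolding sep_edges_def F_def by blast
        then show False using uvR unfolding F_def by blast
      qed
    qed
  qed
  then show ?thesis using cardX by simp
qed



lemma inner_point: "inner (w :: point) x = fst w * fst x + snd w * snd x"
  by (cases w, cases x) simp

lemma succ_exists:
  assumes g: "generic P" and cp: "convex_position P" and p: "p \<in> P" and q0: "q0 \<in> P" "q0 \<noteq> p"
  shows "\<exists>q. (p, q) \<in> hull_edges P"
proof -
  let ?Q = "P - {p}"
  have fP: "finite P" using g unfolding generic_def by (rule conjunct1)
  have fQ: "finite ?Q" using fP by simp
  have q0Q: "q0 \<in> ?Q" using q0 by simp
  have pn: "p \<notin> convex hull ?Q" using cp p unfolding convex_position_def by blast
  have "closed (convex hull ?Q)" using finite_imp_compact_convex_hull[OF fQ] compact_imp_closed by blast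
  then obtain w c where wc: "inner w p < c" "\<forall>x\<in>convex hull ?Q. inner w x > c"
    using separating_hyperplane_closed_point[OF convex_convex_hull _ pn] by blast
  have wQ: "inner w x > c" if "x \<in> ?Q" for x using wc(2) hull_inc[OF that] by blast
  define al where "al x = fst w * (fst x - fst p) + snd w * (snd x - snd p)" for x
  define be where "be x = fst w * (snd x - snd p) - snd w * (fst x - fst p)" for x
  have alpos: "al x > 0" if "x \<in> ?Q" for x
  proof -
    have "inner w x - inner w p > 0" using wQ[OF that] wc(1) by linarith
    then show ?thesis unfolding al_def inner_point by (simp add: algebra_simps)
  qed
  have w0: "fst w * fst w + snd w * snd w > 0"
  proof -
    have "w \<noteq> 0"
    proof
      assume "w = 0"
      then have "inner w q0 = 0" "inner w p = 0" by simp_all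
      then show False using wQ[OF q0Q] wc(1) by linarith
    qed
    then have "fst w \<noteq> 0 \<or> snd w \<noteq> 0" by (cases w) (auto simp: zero_prod_def)
    then show ?thesis
    proof
      assume "fst w \<noteq> 0"
      then have "fst w * fst w > 0" using not_real_square_gt_zero by blast
      moreover have "snd w * snd w \<ge> 0" by simp
      ultimately show ?thesis by linarith
    next
      assume "snd w \<noteq> 0"
      then have "snd w * snd w > 0" using not_real_square_gt_zero by blast
      moreover have "fst w * fst w \<ge> 0" by simp
      ultimately show ?thesis by linarith
    qed
  qed
  define gg where "gg x = be x / al x" for x
  have ne: "gg ` ?Q \<noteq> {}" using q0Q by blast
  have "Min (gg ` ?Q) \<in> gg ` ?Q" by (rule Min_in[OF finite_imageI[OF fQ] ne])
  then obtain q where q: "q \<in> ?Q" "Min (gg ` ?Q) = gg q" by (rule imageE)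
  have qmin: "gg q \<le> gg y" if "y \<in> ?Q" for y unfolding q(2)[symmetric] using Min_le[OF finite_imageI[OF fQ]] that by blast
  have "(p, q) \<in> hull_edges P"
    unfolding hull_edges_def
  proof (intro CollectI case_prodI conjI ballI impI)
    show "p \<in> P" "q \<in> P" "p \<noteq> q" using p q(1) by auto
    fix y assume y: "y \<in> P" "y \<noteq> p \<and> y \<noteq> q"
    then have yQ: "y \<in> ?Q" by simp
    have "be q / al q \<le> be y / al y" using qmin[OF yQ] unfolding gg_def .
    then have le: "be q * al y \<le> be y * al q" using alpos[OF yQ] alpos[OF q(1)] by (simp add: field_simps)
    have idt: "orient p q y * (fst w * fst w + snd w * snd w) = al q * be y - be q * al y"
      unfolding orient_def al_def be_def by algebra
    have "orient p q y * (fst w * fst w + snd w * snd w) \<ge> 0" using idt le by (simp add: algebra_simps)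
    then have "orient p q y \<ge> 0" using w0 by (simp add: zero_le_mult_iff)
    moreover have "orient p q y \<noteq> 0"
      by (rule orient_nz[OF g p]) (use q(1) y in auto)
    ultimately show "orient p q y > 0" by simp
  qed
  then show ?thesis by blast
qed

lemma hull_card:
  assumes g: "generic P" and cp: "convex_position P" and n: "card P \<ge> 2"
  shows "card (hull_edges P) \<ge> card P" "finite (hull_edges P)"
proof -
  have fP: "finite P" using g unfolding generic_def by (rule conjunct1)
  have sub: "hull_edges P \<subseteq> P \<times> P" unfolding hull_edges_def by auto
  show fH: "finite (hull_edges P)" using finite_subset[OF sub] fP by blast
  have "fst ` hull_edges P = P"
  proof
    show "fst ` hull_edges P \<subseteq> P" using sub by auto
    show "P \<subseteq> fst ` hull_edges P"
    proof
      fix p assume p: "p \<in> P"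
      have "\<exists>q0\<in>P. q0 \<noteq> p"
      proof (rule ccontr)
        assume "\<not> (\<exists>q0\<in>P. q0 \<noteq> p)"
        then have "P \<subseteq> {p}" by auto
        then have "card P \<le> 1" using card_mono[of "{p}" P] by simp
        then show False using n by simp
      qed
      then obtain q0 where "q0 \<in> P" "q0 \<noteq> p" by blast
      then obtain q where "(p, q) \<in> hull_edges P" using succ_exists[OF g cp p] by blast
      then show "p \<in> fst ` hull_edges P" by force
    qed
  qed
  then show "card (hull_edges P) \<ge> card P" using card_image_le[OF fH, of fst] by simp
qed



lemma count_subsets:
  assumes fP: "finite P" and p: "p \<in> P" and q: "q \<in> P" and pq: "p \<noteq> q"
  shows "card {R \<in> Pow P. p \<in> R \<and> q \<notin> R} = 2 ^ (card P - 2)"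
proof -
  have eq: "{R \<in> Pow P. p \<in> R \<and> q \<notin> R} = insert p ` Pow (P - {p, q})"
  proof
    show "{R \<in> Pow P. p \<in> R \<and> q \<notin> R} \<subseteq> insert p ` Pow (P - {p, q})"
    proof
      fix R assume R: "R \<in> {R \<in> Pow P. p \<in> R \<and> q \<notin> R}"
      then have "R = insert p (R - {p})" "R - {p} \<in> Pow (P - {p, q})" by auto
      then show "R \<in> insert p ` Pow (P - {p, q})" by (metis imageI)
    qed
    show "insert p ` Pow (P - {p, q}) \<subseteq> {R \<in> Pow P. p \<in> R \<and> q \<notin> R}"
      using p pq by auto
  qed
  have inj: "inj_on (insert p) (Pow (P - {p, q}))"
  proof (rule inj_onI)
    fix A B assume "A \<in> Pow (P - {p, q})" "B \<in> Pow (P - {p, q})" "insert p A = insert p B"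
    then show "A = B" by (metis Diff_insert_absorb PowD insertCI subset_Diff_insert)
  qed
  have "card (P - {p, q}) = card P - 2" using fP p q pq by (simp add: card_Diff_subset)
  then show ?thesis unfolding eq card_image[OF inj] using fP by (simp add: card_Pow)
qed

lemma sum_trans:
  assumes g: "generic P"
  shows "(\<Sum>R\<in>Pow P. card (trans_edges P R)) = card (hull_edges P) * 2 ^ (card P - 2)"
proof -
  let ?H = "hull_edges P"
  have fP: "finite P" using g unfolding generic_def by (rule conjunct1)
  have sub: "?H \<subseteq> P \<times> P" unfolding hull_edges_def by auto
  have fH: "finite ?H" using finite_subset[OF sub] fP by blast
  have "(\<Sum>R\<in>Pow P. card (trans_edges P R)) =
      (\<Sum>R\<in>Pow P. \<Sum>h\<in>?H. if fst h \<in> R \<and> snd h \<notin> R then 1 else 0)"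
  proof (rule sum.cong[OF refl])
    fix R
    have "card (trans_edges P R) = (\<Sum>h\<in>{h \<in> ?H. fst h \<in> R \<and> snd h \<notin> R}. 1)"
      unfolding trans_edges_def by simp
    also have "\<dots> = (\<Sum>h\<in>?H. if fst h \<in> R \<and> snd h \<notin> R then 1 else 0)"
      by (rule sum.inter_filter[OF fH])
    finally show "card (trans_edges P R) = (\<Sum>h\<in>?H. if fst h \<in> R \<and> snd h \<notin> R then 1 else 0)" .
  qed
  also have "\<dots> = (\<Sum>h\<in>?H. \<Sum>R\<in>Pow P. if fst h \<in> R \<and> snd h \<notin> R then 1 else 0)"
    by (rule sum.swap)
  also have "\<dots> = (\<Sum>h\<in>?H. (2::nat) ^ (card P - 2))"
  proof (rule sum.cong[OF refl])
    fix h assume h: "h \<in> ?H"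
    have "(\<Sum>R\<in>Pow P. if fst h \<in> R \<and> snd h \<notin> R then 1 else 0) =
        (\<Sum>R\<in>{R \<in> Pow P. fst h \<in> R \<and> snd h \<notin> R}. (1::nat))"
      by (rule sum.inter_filter[symmetric]) (use fP in simp)
    also have "\<dots> = card {R \<in> Pow P. fst h \<in> R \<and> snd h \<notin> R}" by simp
    also have "\<dots> = 2 ^ (card P - 2)"
      by (rule count_subsets[OF fP]) (use h in \<open>auto simp: hull_edges_def\<close>)
    finally show "(\<Sum>R\<in>Pow P. if fst h \<in> R \<and> snd h \<notin> R then 1 else 0) = (2::nat) ^ (card P - 2)" .
  qed
  also have "\<dots> = card ?H * 2 ^ (card P - 2)" by simp
  finally show ?thesis .
qed

theorem lemma4:
  fixes P :: "point set" and n :: nat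
  assumes "generic P" and "convex_position P" and "card P = n"
  shows "(\<Sum>R\<in>Pow P. real (cr R (P - R))) / 2 ^ n \<ge> real n / 4 - 1"
proof -
  have g: "generic P" and cp: "convex_position P" using assms by auto
  have fP: "finite P" using g unfolding generic_def by (rule conjunct1)
  have nn: "(\<Sum>R\<in>Pow P. real (cr R (P - R))) / 2 ^ n \<ge> 0" by (simp add: sum_nonneg)
  show ?thesis
  proof (cases "n \<ge> 2")
    case False
    then have "real n / 4 - 1 < 0" by simp
    then show ?thesis using nn by linarith
  next
    case True
    have pw: "real (cr R (P - R)) \<ge> real (card (trans_edges P R)) - 1" if "R \<in> Pow P" for R
    proof -
      have R: "R \<subseteq> P" using that by simp
      have "card (trans_edges P R) \<le> cr R (P - R) + 1"
        using trans_le_sep[OF g cp R] sep_le_cr[OF g cp R] by linarith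
      then show ?thesis by linarith
    qed
    have "(\<Sum>R\<in>Pow P. real (cr R (P - R))) \<ge> (\<Sum>R\<in>Pow P. real (card (trans_edges P R)) - 1)"
      by (rule sum_mono) (rule pw)
    also have "(\<Sum>R\<in>Pow P. real (card (trans_edges P R)) - 1) =
        real (\<Sum>R\<in>Pow P. card (trans_edges P R)) - real (card (Pow P))"
      by (simp add: sum_subtractf)
    also have "\<dots> = real (card (hull_edges P) * 2 ^ (n - 2)) - 2 ^ n"
      using sum_trans[OF g] card_Pow[OF fP] assms(3) by simp
    also have "\<dots> \<ge> real n * 2 ^ (n - 2) - 2 ^ n"
    proof -
      have "card (hull_edges P) \<ge> n" using hull_card[OF g cp] True assms(3) by simp
      then have "real (card (hull_edges P)) * 2 ^ (n - 2) \<ge> real n * 2 ^ (n - 2)"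
        by (intro mult_right_mono) simp_all
      then show ?thesis by simp
    qed
    finally have S: "(\<Sum>R\<in>Pow P. real (cr R (P - R))) \<ge> real n * 2 ^ (n - 2) - 2 ^ n" .
    have p4: "(2::real) ^ n = 4 * 2 ^ (n - 2)"
    proof -
      have "n = Suc (Suc (n - 2))" using True by simp
      then have "(2::real) ^ n = 2 ^ Suc (Suc (n - 2))" by (metis)
      then show ?thesis by simp
    qed
    have "(real n * 2 ^ (n - 2) - 2 ^ n) / 2 ^ n = real n / 4 - 1"
      unfolding p4 by (simp add: field_simps)
    moreover have "(\<Sum>R\<in>Pow P. real (cr R (P - R))) / 2 ^ n \<ge> (real n * 2 ^ (n - 2) - 2 ^ n) / 2 ^ n"
      using S by (simp add: divide_right_mono)
    ultimately show ?thesis by linarith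
  qed
qed


end
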